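(* Let $K>0$ and let $\eta:[0,K]\to[0,\infty)$ be twice differentiable (one-sided at the endpoints) with $\eta(K)=0$, and set $\phi(k)=k\eta(k)$. Suppose (i) $\eta'(k)\le 0$ for all $k\in[0,K]$, and (ii) $k\eta''(k)+2\eta'(k)\le 0$ for all $k\in[0,K)$ (equivalently $\phi''(k)\le0$ for $k\in[0,K)$). Then for all $\Delta t,\Delta N>0$, the collision-free condition $$\frac{\Delta N}{\Delta t}\ge \sup_{k\in[0,K)}\frac{\phi(k)}{1-k/K}$$ holds if and only if the CFL condition $$\frac{\Delta N}{\Delta t}\ge \max_{k\in[0,K]}\left|-\eta'(k)k^2\right|$$ holds. In particular: for the Greenshields relation $\eta(k)=V(1-k/K)$ ($V>0$), both conditions are equivalent to $\Delta N/\Delta t\ge VK$; and for the triangular relation $\eta(k)=\min\{V,W(K/k-1)\}$ ($V,W>0$, with $\eta'$ taken wherever it exists), both conditions are equivalent to $\Delta N/\Delta t\ge WK$.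
   Context: $\eta$ is a speed-density relation, $\phi$ the corresponding flow-density relation (fundamental diagram), $K$ the jam density, $\Delta t$ a time step and $\Delta N$ a vehicle step. *)

theory Defs
  imports "HOL-Analysis.Analysis"
begin

definition flow :: "(real \<Rightarrow> real) \<Rightarrow> real \<Rightarrow> real" where
  "flow \<eta> k = k * \<eta> k"

definition collision_free :: "(real \<Rightarrow> real) \<Rightarrow> real \<Rightarrow> real \<Rightarrow> real \<Rightarrow> bool" where
  "collision_free \<eta> K \<Delta>t \<Delta>N \<longleftrightarrow>
     (\<forall>k\<in>{0..<K}. flow \<eta> k / (1 - k / K) \<le> \<Delta>N / \<Delta>t)"

definition cfl_cond :: "(real \<Rightarrow> real) \<Rightarrow> real \<Rightarrow> real \<Rightarrow> real \<Rightarrow> bool" where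
  "cfl_cond \<eta> K \<Delta>t \<Delta>N \<longleftrightarrow>
     (\<forall>k\<in>{0..K}. \<forall>d. (\<eta> has_real_derivative d) (at k within {0..K}) \<longrightarrow>
        \<bar>- d * k\<^sup>2\<bar> \<le> \<Delta>N / \<Delta>t)"

definition greenshields :: "real \<Rightarrow> real \<Rightarrow> real \<Rightarrow> real" where
  "greenshields V K k = V * (1 - k / K)"

text \<open>Triangular relation min{V, W(K/k - 1)}; at k = 0 the second branch is +infinity,
  so the value there is V.\<close>
definition triangular :: "real \<Rightarrow> real \<Rightarrow> real \<Rightarrow> real \<Rightarrow> real" where
  "triangular V W K k = (if k = 0 then V else min V (W * (K / k - 1)))"

end

theory Submission
  imports Defs "HOL-Analysis.Analysis"
begin

lemma uniq_Icc:
  fixes f :: "real \<Rightarrow> real"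
  assumes "a < b" "x \<in> {a..b}" "(f has_real_derivative d) (at x within {a..b})"
    "(f has_real_derivative e) (at x within {a..b})"
  shows "d = e"
  using assms by (intro has_field_derivative_unique[OF assms(3,4)]) (auto simp: trivial_limit_within)

lemma cont_from_deriv:
  assumes "\<forall>k\<in>S. (f has_real_derivative f' k) (at k within S)"
  shows "continuous_on S f"
  using assms by (auto simp: continuous_on_eq_continuous_within intro: DERIV_continuous)

lemma general:
  fixes \<eta> \<eta>' \<eta>'' :: "real \<Rightarrow> real" and K :: real
  assumes K_pos: "K > 0"
    and eta_K: "\<eta> K = 0"
    and d1: "\<forall>k\<in>{0..K}. (\<eta> has_real_derivative \<eta>' k) (at k within {0..K})"
    and d2: "\<forall>k\<in>{0..K}. (\<eta>' has_real_derivative \<eta>'' k) (at k within {0..K})"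
    and i: "\<forall>k\<in>{0..K}. \<eta>' k \<le> 0"
    and ii: "\<forall>k\<in>{0..<K}. k * \<eta>'' k + 2 * \<eta>' k \<le> 0"
  shows "collision_free \<eta> K \<Delta>t \<Delta>N \<longleftrightarrow> - \<eta>' K * K^2 \<le> \<Delta>N / \<Delta>t"
    and "cfl_cond \<eta> K \<Delta>t \<Delta>N \<longleftrightarrow> - \<eta>' K * K^2 \<le> \<Delta>N / \<Delta>t"
proof -
  define H where "H = - \<eta>' K * K^2"
  define c where "c = \<Delta>N / \<Delta>t"
  have c1: "continuous_on {0..K} \<eta>" using cont_from_deriv[OF d1] .
  have c2: "continuous_on {0..K} \<eta>'" using cont_from_deriv[OF d2] .
  have hmono: "- \<eta>' a * a^2 \<le> H" if a: "a \<in> {0..K}" for a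
  proof -
    have "(\<lambda>k. - \<eta>' k * k^2) a \<le> (\<lambda>k. - \<eta>' k * k^2) K"
    proof (rule DERIV_nonneg_imp_increasing_open[where f="\<lambda>k. - \<eta>' k * k^2"])
      show "a \<le> K" using a by auto
      show "continuous_on {a..K} (\<lambda>k. - \<eta>' k * k^2)"
        using a by (intro continuous_intros continuous_on_subset[OF c2]) auto
      fix x assume x: "a < x" "x < K"
      then have xi: "x \<in> interior {0..K}" using a by auto
      have "(\<eta>' has_real_derivative \<eta>'' x) (at x within {0..K})" using d2 x a by auto
      then have "DERIV \<eta>' x :> \<eta>'' x" using at_within_interior[OF xi] by simp
      then have "DERIV (\<lambda>k. - \<eta>' k * k^2) x :> - (\<eta>'' x * x^2 + \<eta>' x * (2 * x))"
        by (auto intro!: derivative_eq_intros)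
      moreover have "- (\<eta>'' x * x^2 + \<eta>' x * (2 * x)) = - x * (x * \<eta>'' x + 2 * \<eta>' x)"
        by (simp add: algebra_simps power2_eq_square)
      moreover have "- x * (x * \<eta>'' x + 2 * \<eta>' x) \<ge> 0"
        using ii x a by (intro mult_nonpos_nonpos) auto
      ultimately show "\<exists>y. DERIV (\<lambda>k. - \<eta>' k * k^2) x :> y \<and> y \<ge> 0" by auto
    qed
    then show ?thesis by (simp add: H_def)
  qed
  have H0: "H \<ge> 0" using i K_pos by (simp add: H_def mult_nonpos_nonneg)
  have gbound: "flow \<eta> k / (1 - k / K) \<le> H" if k: "k \<in> {0..<K}" for k
  proof (cases "k = 0")
    case True then show ?thesis using H0 by (simp add: flow_def)
  next
    case False
    with k have kp: "0 < k" "k < K" by auto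
    have "(\<lambda>s. \<eta> s - H / s) k \<le> (\<lambda>s. \<eta> s - H / s) K"
    proof (rule DERIV_nonneg_imp_increasing_open[where f="\<lambda>s. \<eta> s - H / s"])
      show "k \<le> K" using kp by auto
      show "continuous_on {k..K} (\<lambda>s. \<eta> s - H / s)"
        using kp by (intro continuous_intros continuous_on_subset[OF c1]) auto
      fix x assume x: "k < x" "x < K"
      then have xi: "x \<in> interior {0..K}" using kp by auto
      have "(\<eta> has_real_derivative \<eta>' x) (at x within {0..K})" using d1 x kp by auto
      then have "DERIV \<eta> x :> \<eta>' x" using at_within_interior[OF xi] by simp
      then have "DERIV (\<lambda>s. \<eta> s - H / s) x :> \<eta>' x + H / x^2"
        using x kp by (auto intro!: derivative_eq_intros simp: power2_eq_square)
      moreover have "\<eta>' x + H / x^2 \<ge> 0"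
      proof -
        have "- \<eta>' x * x^2 \<le> H" using hmono[of x] x kp by auto
        then show ?thesis using x kp by (simp add: field_simps)
      qed
      ultimately show "\<exists>y. DERIV (\<lambda>s. \<eta> s - H / s) x :> y \<and> y \<ge> 0" by auto
    qed
    then have "\<eta> k \<le> H / k - H / K" using eta_K by simp
    then have "k * \<eta> k \<le> H * (K - k) / K" using kp by (simp add: field_simps)
    then show ?thesis using kp by (simp add: flow_def field_simps)
  qed
  have lim: "((\<lambda>k. flow \<eta> k / (1 - k / K)) \<longlongrightarrow> H) (at_left K)"
  proof -
    have "((\<lambda>y. (\<eta> y - \<eta> K) / (y - K)) \<longlongrightarrow> \<eta>' K) (at_left K)"
    proof -
      have "(\<eta> has_real_derivative \<eta>' K) (at K within {0..K})" using d1 K_pos by auto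
      then show ?thesis using at_within_Icc_at_left[OF K_pos] by (simp add: has_field_derivative_iff)
    qed
    then have "((\<lambda>y. - K * y * ((\<eta> y - \<eta> K) / (y - K))) \<longlongrightarrow> - K * K * \<eta>' K) (at_left K)"
      by (intro tendsto_intros) (auto intro: tendsto_ident_at)
    moreover have "\<forall>\<^sub>F y in at_left K. - K * y * ((\<eta> y - \<eta> K) / (y - K)) = flow \<eta> y / (1 - y / K)"
      using eventually_at_left_real[OF K_pos] 
      by eventually_elim (use K_pos eta_K in \<open>auto simp: flow_def field_simps\<close>)
    ultimately show ?thesis by (auto simp: H_def power2_eq_square algebra_simps elim: Lim_transform_eventually)
  qed
  show "collision_free \<eta> K \<Delta>t \<Delta>N \<longleftrightarrow> - \<eta>' K * K^2 \<le> \<Delta>N / \<Delta>t"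
  proof
    assume cf: "collision_free \<eta> K \<Delta>t \<Delta>N"
    have "H \<le> c"
    proof (rule tendsto_le[OF trivial_limit_at_left_real tendsto_const lim])
      show "\<forall>\<^sub>F k in at_left K. flow \<eta> k / (1 - k / K) \<le> c"
        using eventually_at_left_real[OF K_pos] 
        by eventually_elim (use cf in \<open>auto simp: collision_free_def c_def\<close>)
    qed
    then show "- \<eta>' K * K^2 \<le> \<Delta>N / \<Delta>t" by (simp add: H_def c_def)
  next
    assume "- \<eta>' K * K^2 \<le> \<Delta>N / \<Delta>t"
    then show "collision_free \<eta> K \<Delta>t \<Delta>N"
      unfolding collision_free_def using gbound H_def by (meson order_trans)
  qed
  show "cfl_cond \<eta> K \<Delta>t \<Delta>N \<longleftrightarrow> - \<eta>' K * K^2 \<le> \<Delta>N / \<Delta>t"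
  proof
    assume "cfl_cond \<eta> K \<Delta>t \<Delta>N"
    then have "\<bar>- \<eta>' K * K\<^sup>2\<bar> \<le> \<Delta>N / \<Delta>t"
      unfolding cfl_cond_def using d1 K_pos by auto
    then show "- \<eta>' K * K^2 \<le> \<Delta>N / \<Delta>t" by simp
  next
    assume a: "- \<eta>' K * K^2 \<le> \<Delta>N / \<Delta>t"
    show "cfl_cond \<eta> K \<Delta>t \<Delta>N"
      unfolding cfl_cond_def
    proof (intro ballI allI impI)
      fix k d assume k: "k \<in> {0..K}" and dd: "(\<eta> has_real_derivative d) (at k within {0..K})"
      have "d = \<eta>' k" using uniq_Icc[OF K_pos k dd] d1 k by auto
      moreover have "- \<eta>' k * k^2 \<ge> 0" using i k by (simp add: mult_nonpos_nonneg)
      ultimately show "\<bar>- d * k\<^sup>2\<bar> \<le> \<Delta>N / \<Delta>t" using hmono[OF k] a H_def by simp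
    qed
  qed
qed


lemma tri_eq1:
  fixes V W K k :: real
  assumes "V > 0" "W > 0" "K > 0" "k \<in> {0..W*K/(V+W)}"
  shows "triangular V W K k = V"
proof (cases "k = 0")
  case False
  then have kp: "k > 0" using assms by auto
  have "k * (V + W) \<le> W * K" using assms(4) assms(1,2) by (simp add: field_simps)
  then have "V \<le> W * (K / k - 1)" using kp by (simp add: field_simps)
  then show ?thesis using False by (simp add: triangular_def)
qed (simp add: triangular_def)

lemma tri_eq2:
  fixes V W K k :: real
  assumes "V > 0" "W > 0" "K > 0" "k \<ge> W*K/(V+W)"
  shows "triangular V W K k = W * (K / k - 1)"
proof -
  have kc: "W*K/(V+W) > 0" using assms by simp
  then have kp: "k > 0" using assms by linarith
  have "k * (V + W) \<ge> W * K" using assms(4) assms(1,2) by (simp add: field_simps)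
  then have "V \<ge> W * (K / k - 1)" using kp by (simp add: field_simps)
  then show ?thesis using kp by (simp add: triangular_def)
qed

lemma tri:
  fixes V W K :: real
  assumes V: "V > 0" and W: "W > 0" and K: "K > 0" and c: "\<Delta>N / \<Delta>t > 0"
  shows "(collision_free (triangular V W K) K \<Delta>t \<Delta>N \<longleftrightarrow> \<Delta>N / \<Delta>t \<ge> W * K)
       \<and> (cfl_cond (triangular V W K) K \<Delta>t \<Delta>N \<longleftrightarrow> \<Delta>N / \<Delta>t \<ge> W * K)"
proof -
  define kc where "kc = W*K/(V+W)"
  have kc0: "0 < kc" using V W K by (simp add: kc_def)
  have kcK: "kc < K" using V W K by (simp add: kc_def field_simps)
  have A: "collision_free (triangular V W K) K \<Delta>t \<Delta>N \<longleftrightarrow> \<Delta>N / \<Delta>t \<ge> W * K"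
  proof
    assume cf: "collision_free (triangular V W K) K \<Delta>t \<Delta>N"
    have "flow (triangular V W K) kc / (1 - kc / K) \<le> \<Delta>N / \<Delta>t"
      using cf kc0 kcK unfolding collision_free_def by auto
    moreover have "flow (triangular V W K) kc / (1 - kc / K) = W * K"
    proof -
      have e0: "kc / K = W / (V + W)" using K by (simp add: kc_def)
      have vw: "V + W > 0" using V W by simp
      have e1: "1 - kc / K = V / (V + W)" unfolding e0 using vw by (simp add: field_simps)
      have "flow (triangular V W K) kc = kc * V"
        using tri_eq1[OF V W K, of kc] kc0 by (simp add: flow_def kc_def)
      moreover have "kc * (V + W) = W * K" using vw by (simp add: kc_def)
      ultimately show ?thesis unfolding e1 using vw V by (simp add: field_simps)
    qed
    ultimately show "\<Delta>N / \<Delta>t \<ge> W * K" by simp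
  next
    assume a: "\<Delta>N / \<Delta>t \<ge> W * K"
    show "collision_free (triangular V W K) K \<Delta>t \<Delta>N"
      unfolding collision_free_def
    proof
      fix k assume k: "k \<in> {0..<K}"
      show "flow (triangular V W K) k / (1 - k / K) \<le> \<Delta>N / \<Delta>t"
      proof (cases "k = 0")
        case True then show ?thesis using c by (simp add: flow_def)
      next
        case False
        then have kp: "0 < k" "k < K" using k by auto
        have "triangular V W K k \<le> W * (K / k - 1)" using False by (simp add: triangular_def)
        then have "k * triangular V W K k \<le> W * (K - k)" using kp
          by (simp add: field_simps mult_left_mono)
        then have "K * (k * triangular V W K k) \<le> K * (W * (K - k))"
          using K by (simp add: mult_left_mono)
        then have le: "K * (k * triangular V W K k) / (K - k) \<le> W * K"
          using kp by (simp add: field_simps)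
        have "flow (triangular V W K) k / (1 - k / K) = K * (k * triangular V W K k) / (K - k)"
          using kp K by (simp add: flow_def field_simps)
        with le have "flow (triangular V W K) k / (1 - k / K) \<le> W * K" by simp
        then show ?thesis using a by simp
      qed
    qed
  qed
  have B: "cfl_cond (triangular V W K) K \<Delta>t \<Delta>N \<longleftrightarrow> \<Delta>N / \<Delta>t \<ge> W * K"
  proof
    assume cf: "cfl_cond (triangular V W K) K \<Delta>t \<Delta>N"
    have "((\<lambda>x. W * (K / x - 1)) has_real_derivative - W * K / K^2) (at K within {0..K})"
      using K by (auto intro!: derivative_eq_intros simp: power2_eq_square)
    then have "(triangular V W K has_real_derivative - W * K / K^2) (at K within {0..K})"
    proof (rule has_field_derivative_transform_within[where d="K - kc"])
      show "0 < K - kc" using kcK by simp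
      show "K \<in> {0..K}" using K by simp
      fix x assume "x \<in> {0..K}" "dist x K < K - kc"
      then have "x \<ge> kc" by (auto simp: dist_real_def)
      then show "W * (K / x - 1) = triangular V W K x" using tri_eq2[OF V W K] kc_def by simp
    qed
    moreover have "K \<in> {0..K}" using K by simp
    ultimately have "\<bar>- (- W * K / K^2) * K\<^sup>2\<bar> \<le> \<Delta>N / \<Delta>t"
      using cf unfolding cfl_cond_def by blast
    moreover have "\<bar>- (- W * K / K^2) * K\<^sup>2\<bar> = W * K" using K W by (simp add: power2_eq_square)
    ultimately show "\<Delta>N / \<Delta>t \<ge> W * K" by simp
  next
    assume a: "\<Delta>N / \<Delta>t \<ge> W * K"
    show "cfl_cond (triangular V W K) K \<Delta>t \<Delta>N"
      unfolding cfl_cond_def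
    proof (intro ballI allI impI)
      fix k d assume k: "k \<in> {0..K}" and dd: "(triangular V W K has_real_derivative d) (at k within {0..K})"
      show "\<bar>- d * k\<^sup>2\<bar> \<le> \<Delta>N / \<Delta>t"
      proof (cases "k \<le> kc")
        case True
        have d1: "(triangular V W K has_real_derivative d) (at k within {0..kc})"
          using kcK by (intro DERIV_subset[OF dd]) auto
        have "((\<lambda>_. V) has_real_derivative 0) (at k within {0..kc})" by simp
        then have d2: "(triangular V W K has_real_derivative 0) (at k within {0..kc})"
        proof (rule has_field_derivative_transform_within[where d=1])
          show "k \<in> {0..kc}" using k True by simp
          fix x assume "x \<in> {0..kc}" "dist x k < 1"
          then show "V = triangular V W K x" using tri_eq1[OF V W K, of x] kc_def by simp
        qed auto
        have "d = 0" using uniq_Icc[OF kc0 _ d1 d2] k True by simp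
        then show ?thesis using c by simp
      next
        case False
        have d1: "(triangular V W K has_real_derivative d) (at k within {kc..K})"
          using kc0 by (intro DERIV_subset[OF dd]) auto
        have kp: "k > 0" using False kc0 by simp
        have "((\<lambda>x. W * (K / x - 1)) has_real_derivative - W * K / k^2) (at k within {kc..K})"
          using kp by (auto intro!: derivative_eq_intros simp: power2_eq_square)
        then have d2: "(triangular V W K has_real_derivative - W * K / k^2) (at k within {kc..K})"
        proof (rule has_field_derivative_transform_within[where d=1])
          show "k \<in> {kc..K}" using k False by simp
          fix x assume "x \<in> {kc..K}" "dist x k < 1"
          then show "W * (K / x - 1) = triangular V W K x" using tri_eq2[OF V W K, of x] kc_def by simp
        qed auto
        have "d = - W * K / k^2" using uniq_Icc[OF kcK _ d1 d2] k False by simp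
        then show ?thesis using a kp W K by (simp add: power2_eq_square)
      qed
    qed
  qed
  show ?thesis using A B by blast
qed

theorem theorem4p3:
  fixes \<eta> \<eta>' \<eta>'' :: "real \<Rightarrow> real" and K :: real
  assumes K_pos: "K > 0"
    and nonneg: "\<forall>k\<in>{0..K}. \<eta> k \<ge> 0"
    and eta_K: "\<eta> K = 0"
    and d1: "\<forall>k\<in>{0..K}. (\<eta> has_real_derivative \<eta>' k) (at k within {0..K})"
    and d2: "\<forall>k\<in>{0..K}. (\<eta>' has_real_derivative \<eta>'' k) (at k within {0..K})"
    and i: "\<forall>k\<in>{0..K}. \<eta>' k \<le> 0"
    and ii: "\<forall>k\<in>{0..<K}. k * \<eta>'' k + 2 * \<eta>' k \<le> 0"
  shows "(\<forall>\<Delta>t \<Delta>N. \<Delta>t > 0 \<longrightarrow> \<Delta>N > 0 \<longrightarrow>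
            (collision_free \<eta> K \<Delta>t \<Delta>N \<longleftrightarrow> cfl_cond \<eta> K \<Delta>t \<Delta>N))
       \<and> (\<forall>V \<Delta>t \<Delta>N. V > 0 \<longrightarrow> \<Delta>t > 0 \<longrightarrow> \<Delta>N > 0 \<longrightarrow>
            (collision_free (greenshields V K) K \<Delta>t \<Delta>N \<longleftrightarrow> \<Delta>N / \<Delta>t \<ge> V * K)
          \<and> (cfl_cond (greenshields V K) K \<Delta>t \<Delta>N \<longleftrightarrow> \<Delta>N / \<Delta>t \<ge> V * K))
       \<and> (\<forall>V W \<Delta>t \<Delta>N. V > 0 \<longrightarrow> W > 0 \<longrightarrow> \<Delta>t > 0 \<longrightarrow> \<Delta>N > 0 \<longrightarrow>
            (collision_free (triangular V W K) K \<Delta>t \<Delta>N \<longleftrightarrow> \<Delta>N / \<Delta>t \<ge> W * K)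
          \<and> (cfl_cond (triangular V W K) K \<Delta>t \<Delta>N \<longleftrightarrow> \<Delta>N / \<Delta>t \<ge> W * K))"
  proof -
  have P1: "\<forall>\<Delta>t \<Delta>N. \<Delta>t > 0 \<longrightarrow> \<Delta>N > 0 \<longrightarrow>
            (collision_free \<eta> K \<Delta>t \<Delta>N \<longleftrightarrow> cfl_cond \<eta> K \<Delta>t \<Delta>N)"
    using general[OF K_pos eta_K d1 d2 i ii] by blast
  have P2: "collision_free (greenshields V K) K \<Delta>t \<Delta>N \<longleftrightarrow> \<Delta>N / \<Delta>t \<ge> V * K"
    "cfl_cond (greenshields V K) K \<Delta>t \<Delta>N \<longleftrightarrow> \<Delta>N / \<Delta>t \<ge> V * K"
    if V: "V > 0" for V \<Delta>t \<Delta>N :: real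
  proof -
    have g1: "greenshields V K K = 0" using K_pos by (simp add: greenshields_def)
    have g2: "\<forall>k\<in>{0..K}. (greenshields V K has_real_derivative (\<lambda>_. - V / K) k) (at k within {0..K})"
      unfolding greenshields_def using K_pos by (auto intro!: derivative_eq_intros)
    have g3: "\<forall>k\<in>{0..K}. ((\<lambda>_. - V / K) has_real_derivative (\<lambda>_. 0) k) (at k within {0..K})"
      by auto
    have g4: "\<forall>k\<in>{0..K}. (\<lambda>_. - V / K) k \<le> 0" using V K_pos by simp
    have g5: "\<forall>k\<in>{0..<K}. k * (\<lambda>_. 0) k + 2 * (\<lambda>_. - V / K) k \<le> 0" using V K_pos by simp
    have e: "- (- V / K) * K^2 = V * K" using K_pos by (simp add: power2_eq_square)
    show "collision_free (greenshields V K) K \<Delta>t \<Delta>N \<longleftrightarrow> \<Delta>N / \<Delta>t \<ge> V * K"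
      using general(1)[OF K_pos g1 g2 g3 g4 g5, of \<Delta>t \<Delta>N] e by simp
    show "cfl_cond (greenshields V K) K \<Delta>t \<Delta>N \<longleftrightarrow> \<Delta>N / \<Delta>t \<ge> V * K"
      using general(2)[OF K_pos g1 g2 g3 g4 g5, of \<Delta>t \<Delta>N] e by simp
  qed
  have P3: "\<forall>V W \<Delta>t \<Delta>N. V > 0 \<longrightarrow> W > 0 \<longrightarrow> \<Delta>t > 0 \<longrightarrow> \<Delta>N > 0 \<longrightarrow>
            (collision_free (triangular V W K) K \<Delta>t \<Delta>N \<longleftrightarrow> \<Delta>N / \<Delta>t \<ge> W * K)
          \<and> (cfl_cond (triangular V W K) K \<Delta>t \<Delta>N \<longleftrightarrow> \<Delta>N / \<Delta>t \<ge> W * K)"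
    using tri K_pos by simp
  show ?thesis using P1 P2 P3 by blast
qed

end
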